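(* Let $A=\sum\{A_{ij}\mid i,j\in I\}$ be a generalized matrix ring having left and right gm non-zero divisors, and suppose that the largest gm ideal of $A$ contained in $r_n(A)$ is zero. Then $r_n(A_{ij})=0$ for all $i,j\in I$.
   Context: A generalized matrix (gm) ring: $I$ is a nonempty index set; for $i,j\in I$, $A_{ij}$ are additive groups with biadditive associative maps $A_{ij}\times A_{jl}\to A_{il}$. $A$ is the external direct sum of the $A_{ij}$ with $(xy)_{ij}=\sum_k x_{ik}y_{kj}$. A gm ideal is an ideal $B$ of $A$ with $B=\sum\{B_{ij}\}$, $B_{ij}\subseteq A_{ij}$. Each $A_{ij}$ is regarded as a $\Gamma$-ring with $\Gamma=A_{ji}$: an ideal is an additive subgroup $B\subseteq A_{ij}$ with $A_{ij}A_{ji}B\subseteq B$, $BA_{ji}A_{ij}\subseteq B$; $x\in A_{ij}$ is von Neumann regular if $x=xyx$ for some $y\in A_{ji}$; $r_n(A_{ij})$ is the largest ideal consisting of von Neumann regular elements. $r_n(A)$ is the largest ideal of the ring $A$ consisting of von Neumann regular elements. $A$ has left and right gm non-zero divisors means: for all $s,t\in I$ there is $0\neq d_{st}\in A_{st}$ with $xd_{st}\neq0$ and $d_{st}y\neq0$ for all $i,j\in I$ and all nonzero $x\in A_{is}$, $y\in A_{tj}$. *)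

theory Defs
  imports Main
begin

text \<open>A generalized matrix (gm) ring over the index type 'i (the index set I is UNIV :: 'i set,
  nonempty automatically). The additive groups A_ij are carriers G i j, additive subgroups of a
  common abelian group 'a; the map A_ij x A_jl -> A_il is mult i j l.\<close>

definition gm_ring :: "('i \<Rightarrow> 'i \<Rightarrow> 'a::ab_group_add set) \<Rightarrow> ('i \<Rightarrow> 'i \<Rightarrow> 'i \<Rightarrow> 'a \<Rightarrow> 'a \<Rightarrow> 'a) \<Rightarrow> bool" where
  "gm_ring G mult \<longleftrightarrow>
     (\<forall>i j. 0 \<in> G i j \<and> (\<forall>x\<in>G i j. \<forall>y\<in>G i j. x + y \<in> G i j) \<and> (\<forall>x\<in>G i j. - x \<in> G i j)) \<and>
     (\<forall>i j l. \<forall>x\<in>G i j. \<forall>y\<in>G j l. mult i j l x y \<in> G i l) \<and>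
     (\<forall>i j l. \<forall>x\<in>G i j. \<forall>x'\<in>G i j. \<forall>y\<in>G j l. mult i j l (x + x') y = mult i j l x y + mult i j l x' y) \<and>
     (\<forall>i j l. \<forall>x\<in>G i j. \<forall>y\<in>G j l. \<forall>y'\<in>G j l. mult i j l x (y + y') = mult i j l x y + mult i j l x y') \<and>
     (\<forall>i j l m. \<forall>x\<in>G i j. \<forall>y\<in>G j l. \<forall>z\<in>G l m.
        mult i l m (mult i j l x y) z = mult i j m x (mult j l m y z))"

text \<open>The ring A: the external direct sum of the A_ij (finitely supported families).\<close>

definition gm_carrier :: "('i \<Rightarrow> 'i \<Rightarrow> 'a::ab_group_add set) \<Rightarrow> ('i \<Rightarrow> 'i \<Rightarrow> 'a) set" where
  "gm_carrier G = {x. (\<forall>i j. x i j \<in> G i j) \<and> finite {(i, j). x i j \<noteq> 0}}"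

definition gm_add :: "('i \<Rightarrow> 'i \<Rightarrow> 'a::ab_group_add) \<Rightarrow> ('i \<Rightarrow> 'i \<Rightarrow> 'a) \<Rightarrow> ('i \<Rightarrow> 'i \<Rightarrow> 'a)" where
  "gm_add x y = (\<lambda>i j. x i j + y i j)"

definition gm_neg :: "('i \<Rightarrow> 'i \<Rightarrow> 'a::ab_group_add) \<Rightarrow> ('i \<Rightarrow> 'i \<Rightarrow> 'a)" where
  "gm_neg x = (\<lambda>i j. - x i j)"

definition gm_zero :: "'i \<Rightarrow> 'i \<Rightarrow> 'a::ab_group_add" where
  "gm_zero = (\<lambda>i j. 0)"

definition gm_mult :: "('i \<Rightarrow> 'i \<Rightarrow> 'i \<Rightarrow> 'a \<Rightarrow> 'a \<Rightarrow> 'a) \<Rightarrow> ('i \<Rightarrow> 'i \<Rightarrow> 'a::ab_group_add)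
     \<Rightarrow> ('i \<Rightarrow> 'i \<Rightarrow> 'a) \<Rightarrow> ('i \<Rightarrow> 'i \<Rightarrow> 'a)" where
  "gm_mult mult x y = (\<lambda>i j. \<Sum>k\<in>{k. x i k \<noteq> 0}. mult i k j (x i k) (y k j))"

definition gm_ring_ideal :: "('i \<Rightarrow> 'i \<Rightarrow> 'a::ab_group_add set) \<Rightarrow> ('i \<Rightarrow> 'i \<Rightarrow> 'i \<Rightarrow> 'a \<Rightarrow> 'a \<Rightarrow> 'a)
     \<Rightarrow> ('i \<Rightarrow> 'i \<Rightarrow> 'a) set \<Rightarrow> bool" where
  "gm_ring_ideal G mult B \<longleftrightarrow> B \<subseteq> gm_carrier G \<and> gm_zero \<in> B \<and>
     (\<forall>x\<in>B. \<forall>y\<in>B. gm_add x y \<in> B) \<and> (\<forall>x\<in>B. gm_neg x \<in> B) \<and>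
     (\<forall>a\<in>gm_carrier G. \<forall>b\<in>B. gm_mult mult a b \<in> B \<and> gm_mult mult b a \<in> B)"

definition gm_single :: "'i \<Rightarrow> 'i \<Rightarrow> 'a \<Rightarrow> ('i \<Rightarrow> 'i \<Rightarrow> 'a::ab_group_add)" where
  "gm_single i j x = (\<lambda>k l. if k = i \<and> l = j then x else 0)"

text \<open>gm ideal: an ideal B with B = sum of B_ij, B_ij subset A_ij, i.e. B contains the
  (i,j)-components of its elements.\<close>
definition gm_ideal :: "('i \<Rightarrow> 'i \<Rightarrow> 'a::ab_group_add set) \<Rightarrow> ('i \<Rightarrow> 'i \<Rightarrow> 'i \<Rightarrow> 'a \<Rightarrow> 'a \<Rightarrow> 'a)
     \<Rightarrow> ('i \<Rightarrow> 'i \<Rightarrow> 'a) set \<Rightarrow> bool" where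
  "gm_ideal G mult B \<longleftrightarrow> gm_ring_ideal G mult B \<and>
     (\<forall>x\<in>B. \<forall>i j. gm_single i j (x i j) \<in> B)"

definition gm_vn_regular :: "('i \<Rightarrow> 'i \<Rightarrow> 'a::ab_group_add set) \<Rightarrow> ('i \<Rightarrow> 'i \<Rightarrow> 'i \<Rightarrow> 'a \<Rightarrow> 'a \<Rightarrow> 'a)
     \<Rightarrow> ('i \<Rightarrow> 'i \<Rightarrow> 'a) \<Rightarrow> bool" where
  "gm_vn_regular G mult x \<longleftrightarrow> (\<exists>y\<in>gm_carrier G. x = gm_mult mult (gm_mult mult x y) x)"

text \<open>r_n(A): the largest ideal of A consisting of von Neumann regular elements,
  realised as the union of all such ideals.\<close>
definition rn_ring :: "('i \<Rightarrow> 'i \<Rightarrow> 'a::ab_group_add set) \<Rightarrow> ('i \<Rightarrow> 'i \<Rightarrow> 'i \<Rightarrow> 'a \<Rightarrow> 'a \<Rightarrow> 'a)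
     \<Rightarrow> ('i \<Rightarrow> 'i \<Rightarrow> 'a) set" where
  "rn_ring G mult = \<Union>{B. gm_ring_ideal G mult B \<and> (\<forall>x\<in>B. gm_vn_regular G mult x)}"

text \<open>A_ij as a Gamma-ring with Gamma = A_ji.\<close>
definition gamma_ideal :: "('i \<Rightarrow> 'i \<Rightarrow> 'a::ab_group_add set) \<Rightarrow> ('i \<Rightarrow> 'i \<Rightarrow> 'i \<Rightarrow> 'a \<Rightarrow> 'a \<Rightarrow> 'a)
     \<Rightarrow> 'i \<Rightarrow> 'i \<Rightarrow> 'a set \<Rightarrow> bool" where
  "gamma_ideal G mult i j B \<longleftrightarrow> B \<subseteq> G i j \<and> 0 \<in> B \<and>
     (\<forall>x\<in>B. \<forall>y\<in>B. x + y \<in> B) \<and> (\<forall>x\<in>B. - x \<in> B) \<and>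
     (\<forall>a\<in>G i j. \<forall>g\<in>G j i. \<forall>b\<in>B. mult i i j (mult i j i a g) b \<in> B) \<and>
     (\<forall>b\<in>B. \<forall>g\<in>G j i. \<forall>a\<in>G i j. mult i i j (mult i j i b g) a \<in> B)"

definition gamma_vn_regular :: "('i \<Rightarrow> 'i \<Rightarrow> 'a::ab_group_add set) \<Rightarrow> ('i \<Rightarrow> 'i \<Rightarrow> 'i \<Rightarrow> 'a \<Rightarrow> 'a \<Rightarrow> 'a)
     \<Rightarrow> 'i \<Rightarrow> 'i \<Rightarrow> 'a \<Rightarrow> bool" where
  "gamma_vn_regular G mult i j x \<longleftrightarrow> (\<exists>y\<in>G j i. x = mult i i j (mult i j i x y) x)"

text \<open>r_n(A_ij): the largest ideal of the Gamma-ring A_ij consisting of von Neumann regular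
  elements, realised as the union of all such ideals.\<close>
definition rn_gamma :: "('i \<Rightarrow> 'i \<Rightarrow> 'a::ab_group_add set) \<Rightarrow> ('i \<Rightarrow> 'i \<Rightarrow> 'i \<Rightarrow> 'a \<Rightarrow> 'a \<Rightarrow> 'a)
     \<Rightarrow> 'i \<Rightarrow> 'i \<Rightarrow> 'a set" where
  "rn_gamma G mult i j = \<Union>{B. gamma_ideal G mult i j B \<and> (\<forall>x\<in>B. gamma_vn_regular G mult i j x)}"

definition gm_nonzero_divisors :: "('i \<Rightarrow> 'i \<Rightarrow> 'a::ab_group_add set) \<Rightarrow> ('i \<Rightarrow> 'i \<Rightarrow> 'i \<Rightarrow> 'a \<Rightarrow> 'a \<Rightarrow> 'a) \<Rightarrow> bool" where
  "gm_nonzero_divisors G mult \<longleftrightarrow>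
     (\<forall>s t. \<exists>d\<in>G s t. d \<noteq> 0 \<and>
        (\<forall>i. \<forall>x\<in>G i s. x \<noteq> 0 \<longrightarrow> mult i s t x d \<noteq> 0) \<and>
        (\<forall>j. \<forall>y\<in>G t j. y \<noteq> 0 \<longrightarrow> mult s t j d y \<noteq> 0))"

end

theory Submission imports Defs "HOL-Library.Function_Algebras" begin

locale rng_on =
  fixes S :: "'b::ab_group_add set" and M :: "'b \<Rightarrow> 'b \<Rightarrow> 'b"
  assumes zero_in: "0 \<in> S"
    and add_in: "a \<in> S \<Longrightarrow> b \<in> S \<Longrightarrow> a + b \<in> S"
    and neg_in: "a \<in> S \<Longrightarrow> - a \<in> S"
    and mul_in: "a \<in> S \<Longrightarrow> b \<in> S \<Longrightarrow> M a b \<in> S"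
    and distl: "a \<in> S \<Longrightarrow> b \<in> S \<Longrightarrow> c \<in> S \<Longrightarrow> M a (b + c) = M a b + M a c"
    and distr: "a \<in> S \<Longrightarrow> b \<in> S \<Longrightarrow> c \<in> S \<Longrightarrow> M (a + b) c = M a c + M b c"
    and assoc: "a \<in> S \<Longrightarrow> b \<in> S \<Longrightarrow> c \<in> S \<Longrightarrow> M (M a b) c = M a (M b c)"
begin

lemma diff_in: "a \<in> S \<Longrightarrow> b \<in> S \<Longrightarrow> a - b \<in> S"
  using add_in[of a "- b"] neg_in[of b] by simp

lemma mul0r: "a \<in> S \<Longrightarrow> M a 0 = 0"
  using distl[of a 0 0] zero_in by simp
lemma mul0l: "a \<in> S \<Longrightarrow> M 0 a = 0"
  using distr[of 0 0 a] zero_in by simp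

lemma negl: "a \<in> S \<Longrightarrow> b \<in> S \<Longrightarrow> M a (- b) = - M a b"
proof -
  assume a: "a \<in> S" and b: "b \<in> S"
  have "M a b + M a (- b) = M a (b + - b)" using distl[of a b "-b"] a b neg_in by simp
  also have "\<dots> = 0" using mul0r[OF a] by simp
  finally show ?thesis by (simp add: eq_neg_iff_add_eq_0 add.commute)
qed

lemma negr: "a \<in> S \<Longrightarrow> b \<in> S \<Longrightarrow> M (- a) b = - M a b"
proof -
  assume a: "a \<in> S" and b: "b \<in> S"
  have "M a b + M (- a) b = M (a + - a) b" using distr[of a "-a" b] a b neg_in by simp
  also have "\<dots> = 0" using mul0l[OF b] by simp
  finally show ?thesis by (simp add: eq_neg_iff_add_eq_0 add.commute)
qed

lemma diffl: "a \<in> S \<Longrightarrow> b \<in> S \<Longrightarrow> c \<in> S \<Longrightarrow> M a (b - c) = M a b - M a c"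
  using distl[of a b "- c"] neg_in[of c] negl[of a c] by simp

lemma diffr: "a \<in> S \<Longrightarrow> b \<in> S \<Longrightarrow> c \<in> S \<Longrightarrow> M (a - b) c = M a c - M b c"
  using distr[of a "- b" c] neg_in[of b] negr[of b c] by simp

lemma brown_mccoy:
  assumes x: "x \<in> S" and y: "y \<in> S" and z: "z \<in> S"
    and a: "x - M (M x y) x = M (M (x - M (M x y) x) z) (x - M (M x y) x)"
  shows "\<exists>w\<in>S. x = M (M x w) x"
proof -
  define p where "p = x - M (M x y) x"
  have p: "p \<in> S" unfolding p_def by (intro diff_in mul_in x y)
  define L where "L = z - M (M y x) z"
  have L: "L \<in> S" unfolding L_def by (intro diff_in mul_in x y z)
  define u where "u = y + (L - M L (M x y))"
  have u: "u \<in> S" unfolding u_def by (intro add_in diff_in mul_in x y L)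
  have xL: "M x L = M p z"
    unfolding L_def p_def using x y z
    by (simp add: diffl diffr mul_in assoc)
  define q where "q = M p z"
  have q: "q \<in> S" unfolding q_def by (intro mul_in p z)
  have "M (M x (L - M L (M x y))) x = M (q - M q (M x y)) x"
  proof -
    have "M x (M L (M x y)) = M q (M x y)"
      using assoc[of x L "M x y"] x y L mul_in xL q_def by simp
    then show ?thesis using x y L by (simp add: diffl mul_in xL q_def)
  qed
  also have "\<dots> = M q p"
    unfolding p_def using x y q by (simp add: diffr diffl mul_in assoc)
  also have "\<dots> = p" using a unfolding q_def p_def by simp
  finally have 1: "M (M x (L - M L (M x y))) x = p" .
  have "M (M x u) x = M (M x y) x + M (M x (L - M L (M x y))) x"
    unfolding u_def using x y L by (simp add: distl distr diff_in mul_in)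
  also have "\<dots> = x" using 1 unfolding p_def by simp
  finally show ?thesis using u by (intro bexI[of _ u]) auto
qed

lemma brown_mccoy':
  "x \<in> S \<Longrightarrow> y \<in> S \<Longrightarrow> (\<exists>z\<in>S. x - M (M x y) x = M (M (x - M (M x y) x) z) (x - M (M x y) x))
    \<Longrightarrow> \<exists>w\<in>S. x = M (M x w) x"
  using brown_mccoy by blast

end

locale gmr =
  fixes G :: "'i \<Rightarrow> 'i \<Rightarrow> 'a::ab_group_add set"
    and mult :: "'i \<Rightarrow> 'i \<Rightarrow> 'i \<Rightarrow> 'a \<Rightarrow> 'a \<Rightarrow> 'a"
  assumes gm: "gm_ring G mult"
begin

lemmas gmU = gm[unfolded gm_ring_def]
lemmas gmP1 = conjunct1[OF gmU]
lemmas gmP2 = conjunct1[OF conjunct2[OF gmU]]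
lemmas gmP3 = conjunct1[OF conjunct2[OF conjunct2[OF gmU]]]
lemmas gmP4 = conjunct1[OF conjunct2[OF conjunct2[OF conjunct2[OF gmU]]]]
lemmas gmP5 = conjunct2[OF conjunct2[OF conjunct2[OF conjunct2[OF gmU]]]]
lemmas gm_parts = gmP1 gmP2 gmP3 gmP4 gmP5

lemma zeroG[simp]: "0 \<in> G i j" using gm_parts(1) by simp
lemma addG[simp]: "x \<in> G i j \<Longrightarrow> y \<in> G i j \<Longrightarrow> x + y \<in> G i j" using gm_parts(1) by simp
lemma negG[simp]: "x \<in> G i j \<Longrightarrow> - x \<in> G i j" using gm_parts(1) by simp
lemma diffG[simp]: "x \<in> G i j \<Longrightarrow> y \<in> G i j \<Longrightarrow> x - y \<in> G i j"
  using addG[of x i j "- y"] negG[of y i j] by simp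
lemma multG[simp]: "x \<in> G i j \<Longrightarrow> y \<in> G j l \<Longrightarrow> mult i j l x y \<in> G i l" using gm_parts(2) by simp
lemma distr: "x \<in> G i j \<Longrightarrow> x' \<in> G i j \<Longrightarrow> y \<in> G j l \<Longrightarrow> mult i j l (x + x') y = mult i j l x y + mult i j l x' y"
  using gm_parts(3) by simp
lemma distl: "x \<in> G i j \<Longrightarrow> y \<in> G j l \<Longrightarrow> y' \<in> G j l \<Longrightarrow> mult i j l x (y + y') = mult i j l x y + mult i j l x y'"
  using gm_parts(4) by simp
lemma assoc: "x \<in> G i j \<Longrightarrow> y \<in> G j l \<Longrightarrow> z \<in> G l m \<Longrightarrow>
        mult i l m (mult i j l x y) z = mult i j m x (mult j l m y z)"
  using gm_parts(5) by simp

lemma mult0l[simp]: "y \<in> G j l \<Longrightarrow> mult i j l 0 y = 0"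
  using distr[of 0 i j 0 y l] by simp
lemma mult0r[simp]: "x \<in> G i j \<Longrightarrow> mult i j l x 0 = 0"
  using distl[of x i j 0 l 0] by simp
lemma negl: "x \<in> G i j \<Longrightarrow> y \<in> G j l \<Longrightarrow> mult i j l (- x) y = - mult i j l x y"
  using distr[of x i j "-x" y l] by (simp add: eq_neg_iff_add_eq_0 add.commute)
lemma negr: "x \<in> G i j \<Longrightarrow> y \<in> G j l \<Longrightarrow> mult i j l x (- y) = - mult i j l x y"
  using distl[of x i j y l "-y"] by (simp add: eq_neg_iff_add_eq_0 add.commute)
lemma diffl: "x \<in> G i j \<Longrightarrow> x' \<in> G i j \<Longrightarrow> y \<in> G j l \<Longrightarrow> mult i j l (x - x') y = mult i j l x y - mult i j l x' y"
  using distr[of x i j "- x'" y l] negG[of x' i j] negl[of x' i j y l] by simp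
lemma diffr: "x \<in> G i j \<Longrightarrow> y \<in> G j l \<Longrightarrow> y' \<in> G j l \<Longrightarrow> mult i j l x (y - y') = mult i j l x y - mult i j l x y'"
  using distl[of x i j y l "- y'"] negG[of y' j l] negr[of x i j y' l] by simp

lemma sumG: "finite F \<Longrightarrow> (\<And>k. k \<in> F \<Longrightarrow> f k \<in> G i j) \<Longrightarrow> sum f F \<in> G i j"
  by (induction F rule: finite_induct) auto

lemma sum_multl: "finite F \<Longrightarrow> (\<And>k. k \<in> F \<Longrightarrow> f k \<in> G j l) \<Longrightarrow> x \<in> G i j \<Longrightarrow>
   mult i j l x (sum f F) = (\<Sum>k\<in>F. mult i j l x (f k))"
  by (induction F rule: finite_induct) (auto simp: distl sumG)

lemma sum_multr: "finite F \<Longrightarrow> (\<And>k. k \<in> F \<Longrightarrow> f k \<in> G i j) \<Longrightarrow> y \<in> G j l \<Longrightarrow>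
   mult i j l (sum f F) y = (\<Sum>k\<in>F. mult i j l (f k) y)"
  by (induction F rule: finite_induct) (auto simp: distr sumG)

lemma carrier_G: "x \<in> gm_carrier G \<Longrightarrow> x i j \<in> G i j"
  unfolding gm_carrier_def by blast

lemma carrier_fin: "x \<in> gm_carrier G \<Longrightarrow> finite {(i, j). x i j \<noteq> 0}"
  unfolding gm_carrier_def by blast

lemma row_fin: "x \<in> gm_carrier G \<Longrightarrow> finite {k. x i k \<noteq> 0}"
proof -
  assume x: "x \<in> gm_carrier G"
  have "{k. x i k \<noteq> 0} \<subseteq> snd ` {(i, j). x i j \<noteq> 0}" by force
  then show ?thesis using carrier_fin[OF x] finite_surj by blast
qed

lemma rows_fin: "x \<in> gm_carrier G \<Longrightarrow> finite {i. \<exists>k. x i k \<noteq> 0}"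
proof -
  assume x: "x \<in> gm_carrier G"
  have "{i. \<exists>k. x i k \<noteq> 0} \<subseteq> fst ` {(i, j). x i j \<noteq> 0}" by force
  then show ?thesis using carrier_fin[OF x] finite_surj by blast
qed

lemma cols_fin: "x \<in> gm_carrier G \<Longrightarrow> finite {j. \<exists>k. x k j \<noteq> 0}"
proof -
  assume x: "x \<in> gm_carrier G"
  have "{j. \<exists>k. x k j \<noteq> 0} \<subseteq> snd ` {(i, j). x i j \<noteq> 0}" by force
  then show ?thesis using carrier_fin[OF x] finite_surj by blast
qed

lemma gm_mult_eq:
  assumes x: "x \<in> gm_carrier G" and y: "y \<in> gm_carrier G" and F: "finite F"
    and sub: "\<And>k. k \<notin> F \<Longrightarrow> x i k = 0 \<or> y k j = 0"
  shows "gm_mult mult x y i j = (\<Sum>k\<in>F. mult i k j (x i k) (y k j))"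
proof -
  let ?f = "\<lambda>k. mult i k j (x i k) (y k j)"
  let ?E = "{k. x i k \<noteq> 0}"
  have E: "finite ?E" by (rule row_fin[OF x])
  have "gm_mult mult x y i j = sum ?f ?E" unfolding gm_mult_def by simp
  also have "\<dots> = sum ?f (?E \<union> F)"
    by (rule sum.mono_neutral_left) (use E F x y in \<open>auto simp: carrier_G\<close>)
  also have "\<dots> = sum ?f F"
  proof (rule sum.mono_neutral_right)
    show "\<forall>k\<in>?E \<union> F - F. ?f k = 0"
    proof
      fix k assume "k \<in> ?E \<union> F - F"
      then have "x i k = 0 \<or> y k j = 0" using sub by blast
      then show "?f k = 0"
      proof
        assume "x i k = 0" then show ?thesis using y by (simp add: carrier_G)
      next
        assume "y k j = 0" then show ?thesis using x by (simp add: carrier_G)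
      qed
    qed
  qed (use E F in auto)
  finally show ?thesis .
qed


lemma plus_app[simp]: "(x + y) i j = x i j + (y i j :: 'a)" by simp
lemma carrier_zero[simp]: "(0 :: 'i \<Rightarrow> 'i \<Rightarrow> 'a) \<in> gm_carrier G"
  unfolding gm_carrier_def by simp
lemma carrier_add[simp]: "x \<in> gm_carrier G \<Longrightarrow> y \<in> gm_carrier G \<Longrightarrow> x + y \<in> gm_carrier G"
proof -
  assume x: "x \<in> gm_carrier G" and y: "y \<in> gm_carrier G"
  have "{(i, j). (x + y) i j \<noteq> 0} \<subseteq> {(i, j). x i j \<noteq> 0} \<union> {(i, j). y i j \<noteq> 0}" by auto
  then show ?thesis using x y unfolding gm_carrier_def by (auto intro: finite_subset)
qed
lemma carrier_neg[simp]: "x \<in> gm_carrier G \<Longrightarrow> - x \<in> gm_carrier G"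
  unfolding gm_carrier_def by simp

lemma carrier_mult[simp]:
  assumes x: "x \<in> gm_carrier G" and y: "y \<in> gm_carrier G"
  shows "gm_mult mult x y \<in> gm_carrier G"
proof -
  have 1: "gm_mult mult x y i j \<in> G i j" for i j
    unfolding gm_mult_def by (rule sumG[OF row_fin[OF x]]) (simp add: carrier_G x y)
  have "{(i, j). gm_mult mult x y i j \<noteq> 0} \<subseteq> {i. \<exists>k. x i k \<noteq> 0} \<times> {j. \<exists>k. y k j \<noteq> 0}"
  proof (clarsimp)
    fix i j assume ne: "gm_mult mult x y i j \<noteq> 0"
    show "(\<exists>k. x i k \<noteq> 0) \<and> (\<exists>k. y k j \<noteq> 0)"
    proof (rule ccontr)
      assume "\<not> ?thesis"
      then have "\<forall>k. x i k = 0 \<or> y k j = 0" by blast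
      then have "gm_mult mult x y i j = (\<Sum>k\<in>{}. mult i k j (x i k) (y k j))"
        by (intro gm_mult_eq x y) auto
      with ne show False by simp
    qed
  qed
  then have "finite {(i, j). gm_mult mult x y i j \<noteq> 0}"
    using rows_fin[OF x] cols_fin[OF y] by (auto intro: finite_subset)
  with 1 show ?thesis unfolding gm_carrier_def by blast
qed

lemma gm_distl:
  assumes x: "x \<in> gm_carrier G" and y: "y \<in> gm_carrier G" and z: "z \<in> gm_carrier G"
  shows "gm_mult mult x (y + z) = gm_mult mult x y + gm_mult mult x z"
proof (intro ext)
  fix i j
  show "gm_mult mult x (y + z) i j = (gm_mult mult x y + gm_mult mult x z) i j"
    using x y z by (simp add: gm_mult_def distl carrier_G sum.distrib)
qed

lemma gm_distr:
  assumes x: "x \<in> gm_carrier G" and y: "y \<in> gm_carrier G" and z: "z \<in> gm_carrier G"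
  shows "gm_mult mult (x + y) z = gm_mult mult x z + gm_mult mult y z"
proof (intro ext)
  fix i j
  let ?F = "{k. x i k \<noteq> 0} \<union> {k. y i k \<noteq> 0}"
  have F: "finite ?F" using row_fin[OF x] row_fin[OF y] by simp
  have "gm_mult mult (x + y) z i j = (\<Sum>k\<in>?F. mult i k j ((x + y) i k) (z k j))"
    by (rule gm_mult_eq) (use x y z F in auto)
  moreover have "gm_mult mult x z i j = (\<Sum>k\<in>?F. mult i k j (x i k) (z k j))"
    by (rule gm_mult_eq) (use x y z F in auto)
  moreover have "gm_mult mult y z i j = (\<Sum>k\<in>?F. mult i k j (y i k) (z k j))"
    by (rule gm_mult_eq) (use x y z F in auto)
  ultimately show "gm_mult mult (x + y) z i j = (gm_mult mult x z + gm_mult mult y z) i j"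
    using x y z by (simp add: distr carrier_G sum.distrib)
qed

lemma gm_assoc:
  assumes x: "x \<in> gm_carrier G" and y: "y \<in> gm_carrier G" and z: "z \<in> gm_carrier G"
  shows "gm_mult mult (gm_mult mult x y) z = gm_mult mult x (gm_mult mult y z)"
proof (intro ext)
  fix i j
  let ?F = "{k. x i k \<noteq> 0}" and ?L = "{l. \<exists>k. y k l \<noteq> 0}"
  have F: "finite ?F" using row_fin[OF x] .
  have L: "finite ?L" using cols_fin[OF y] .
  have xy: "gm_mult mult x y i l = (\<Sum>k\<in>?F. mult i k l (x i k) (y k l))" for l
    by (rule gm_mult_eq) (use x y F in auto)
  have yz: "gm_mult mult y z k j = (\<Sum>l\<in>?L. mult k l j (y k l) (z l j))" for k
    by (rule gm_mult_eq) (use y z L in auto)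
  have "gm_mult mult (gm_mult mult x y) z i j = (\<Sum>l\<in>?L. mult i l j (gm_mult mult x y i l) (z l j))"
  proof (rule gm_mult_eq)
    fix l assume "l \<notin> ?L"
    then have "\<forall>k. y k l = 0" by auto
    then show "gm_mult mult x y i l = 0 \<or> z l j = 0" using xy[of l] x by (simp add: carrier_G)
  qed (use x y z L in auto)
  also have "\<dots> = (\<Sum>l\<in>?L. \<Sum>k\<in>?F. mult i l j (mult i k l (x i k) (y k l)) (z l j))"
    using x y z F by (simp add: xy sum_multr carrier_G)
  also have "\<dots> = (\<Sum>k\<in>?F. \<Sum>l\<in>?L. mult i k j (x i k) (mult k l j (y k l) (z l j)))"
    using x y z by (subst sum.swap) (simp add: assoc carrier_G)
  also have "\<dots> = (\<Sum>k\<in>?F. mult i k j (x i k) (gm_mult mult y z k j))"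
    using x y z L by (simp add: yz sum_multl carrier_G)
  also have "\<dots> = gm_mult mult x (gm_mult mult y z) i j"
    unfolding gm_mult_def by simp
  finally show "gm_mult mult (gm_mult mult x y) z i j = gm_mult mult x (gm_mult mult y z) i j" .
qed

lemma rng: "rng_on (gm_carrier G) (gm_mult mult)"
  by unfold_locales (auto simp: gm_distl gm_distr gm_assoc)


lemma gm_add_eq: "gm_add x y = x + y" unfolding gm_add_def by (intro ext) simp
lemma gm_neg_eq: "gm_neg x = - x" unfolding gm_neg_def by (intro ext) simp
lemma gm_zero_eq: "gm_zero = 0" unfolding gm_zero_def by (intro ext) simp

lemma single_carrier[simp]: "u \<in> G a b \<Longrightarrow> gm_single a b u \<in> gm_carrier G"
proof -
  assume u: "u \<in> G a b"
  have "{(i, j). gm_single a b u i j \<noteq> 0} \<subseteq> {(a, b)}" by (auto simp: gm_single_def split: if_splits)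
  then show ?thesis using u unfolding gm_carrier_def by (auto simp: gm_single_def intro: finite_subset)
qed

lemma mult_single_right:
  assumes x: "x \<in> gm_carrier G" and v: "v \<in> G b c"
  shows "gm_mult mult x (gm_single b c v) = (\<lambda>i j. if j = c then mult i b c (x i b) v else 0)"
proof (intro ext)
  fix i j
  have "gm_mult mult x (gm_single b c v) i j = (\<Sum>k\<in>{b}. mult i k j (x i k) (gm_single b c v k j))"
    by (rule gm_mult_eq[OF x single_carrier[OF v]]) (auto simp: gm_single_def)
  then show "gm_mult mult x (gm_single b c v) i j = (if j = c then mult i b c (x i b) v else 0)"
    using x v by (simp add: gm_single_def carrier_G)
qed

lemma mult_single_left:
  assumes y: "y \<in> gm_carrier G" and u: "u \<in> G a b"
  shows "gm_mult mult (gm_single a b u) y = (\<lambda>i j. if i = a then mult a b j u (y b j) else 0)"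
proof (intro ext)
  fix i j
  have "gm_mult mult (gm_single a b u) y i j = (\<Sum>k\<in>{b}. mult i k j (gm_single a b u i k) (y k j))"
    by (rule gm_mult_eq[OF single_carrier[OF u] y]) (auto simp: gm_single_def)
  then show "gm_mult mult (gm_single a b u) y i j = (if i = a then mult a b j u (y b j) else 0)"
    using y u by (simp add: gm_single_def carrier_G)
qed

end

locale gmr2 = gmr +
  fixes i0 j0 :: 'i and B :: "'a::ab_group_add set"
  assumes nzd: "gm_nonzero_divisors G mult"
    and Bid: "gamma_ideal G mult i0 j0 B"
    and Breg: "\<forall>x\<in>B. gamma_vn_regular G mult i0 j0 x"
begin

lemma BG: "c \<in> B \<Longrightarrow> c \<in> G i0 j0" using Bid unfolding gamma_ideal_def by blast
lemma B0[simp]: "0 \<in> B" using Bid unfolding gamma_ideal_def by blast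
lemma Badd: "c \<in> B \<Longrightarrow> c' \<in> B \<Longrightarrow> c + c' \<in> B" using Bid unfolding gamma_ideal_def by blast
lemma Bneg: "c \<in> B \<Longrightarrow> - c \<in> B" using Bid unfolding gamma_ideal_def by blast
lemma B5: "a \<in> G i0 j0 \<Longrightarrow> g \<in> G j0 i0 \<Longrightarrow> c \<in> B \<Longrightarrow> mult i0 i0 j0 (mult i0 j0 i0 a g) c \<in> B"
  using Bid unfolding gamma_ideal_def by blast
lemma B6: "c \<in> B \<Longrightarrow> g \<in> G j0 i0 \<Longrightarrow> a \<in> G i0 j0 \<Longrightarrow> mult i0 i0 j0 (mult i0 j0 i0 c g) a \<in> B"
  using Bid unfolding gamma_ideal_def by blast
lemma Bregular: "c \<in> B \<Longrightarrow> \<exists>y\<in>G j0 i0. c = mult i0 i0 j0 (mult i0 j0 i0 c y) c"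
  using Breg unfolding gamma_vn_regular_def by blast

lemma lB: assumes c: "c \<in> B" and p: "p \<in> G i0 i0" shows "mult i0 i0 j0 p c \<in> B"
proof -
  obtain y where y: "y \<in> G j0 i0" and hc: "c = mult i0 i0 j0 (mult i0 j0 i0 c y) c"
    using Bregular[OF c] by blast
  have cG: "c \<in> G i0 j0" using BG[OF c] .
  have "mult i0 i0 j0 p c = mult i0 i0 j0 p (mult i0 i0 j0 (mult i0 j0 i0 c y) c)"
    using arg_cong[OF hc, of "mult i0 i0 j0 p"] .
  also have "\<dots> = mult i0 i0 j0 (mult i0 j0 i0 (mult i0 i0 j0 p c) y) c"
    using cG y p by (simp add: assoc)
  also have "\<dots> \<in> B" using B5 cG y p c by simp
  finally show ?thesis .
qed

lemma rB: assumes c: "c \<in> B" and q: "q \<in> G j0 j0" shows "mult i0 j0 j0 c q \<in> B"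
proof -
  obtain y where y: "y \<in> G j0 i0" and hc: "c = mult i0 i0 j0 (mult i0 j0 i0 c y) c"
    using Bregular[OF c] by blast
  have cG: "c \<in> G i0 j0" using BG[OF c] .
  have "mult i0 j0 j0 c q = mult i0 j0 j0 (mult i0 i0 j0 (mult i0 j0 i0 c y) c) q"
    using arg_cong[OF hc, of "\<lambda>c. mult i0 j0 j0 c q"] .
  also have "\<dots> = mult i0 i0 j0 (mult i0 j0 i0 c y) (mult i0 j0 j0 c q)"
    using cG y q by (simp add: assoc)
  also have "\<dots> \<in> B" using B6 cG y q c by simp
  finally show ?thesis .
qed

definition Cset :: "'i \<Rightarrow> 'i \<Rightarrow> 'a set" where
  "Cset k l = {u \<in> G k l. \<forall>p\<in>G i0 k. \<forall>q\<in>G l j0. mult i0 l j0 (mult i0 k l p u) q \<in> B}"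

definition CC :: "('i \<Rightarrow> 'i \<Rightarrow> 'a) set" where
  "CC = {x \<in> gm_carrier G. \<forall>k l. x k l \<in> Cset k l}"

lemma Cset_G: "u \<in> Cset k l \<Longrightarrow> u \<in> G k l" unfolding Cset_def by blast
lemma Cset_zero[simp]: "0 \<in> Cset k l" unfolding Cset_def by simp
lemma Cset_add: "u \<in> Cset k l \<Longrightarrow> v \<in> Cset k l \<Longrightarrow> u + v \<in> Cset k l"
  unfolding Cset_def by (auto simp: distl distr intro!: Badd)
lemma Cset_neg: "u \<in> Cset k l \<Longrightarrow> - u \<in> Cset k l"
  unfolding Cset_def by (auto simp: negl negr intro!: Bneg)
lemma Cset_diff: "u \<in> Cset k l \<Longrightarrow> v \<in> Cset k l \<Longrightarrow> u - v \<in> Cset k l"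
  using Cset_add[of u k l "- v"] Cset_neg[of v k l] by simp
lemma Cset_sum: "finite F \<Longrightarrow> (\<And>t. t \<in> F \<Longrightarrow> f t \<in> Cset k l) \<Longrightarrow> sum f F \<in> Cset k l"
  by (induction F rule: finite_induct) (auto intro: Cset_add)
lemma Cset_multl: assumes c: "c \<in> G m k" and u: "u \<in> Cset k l" shows "mult m k l c u \<in> Cset m l"
  unfolding Cset_def
proof (intro CollectI conjI ballI)
  have uG: "u \<in> G k l" using Cset_G[OF u] .
  show "mult m k l c u \<in> G m l" using c uG by simp
  fix p q assume p: "p \<in> G i0 m" and q: "q \<in> G l j0"
  have "mult i0 l j0 (mult i0 m l p (mult m k l c u)) q = mult i0 l j0 (mult i0 k l (mult i0 m k p c) u) q"
    using p q c uG by (simp add: assoc)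
  also have "\<dots> \<in> B" using u p c q unfolding Cset_def by simp
  finally show "mult i0 l j0 (mult i0 m l p (mult m k l c u)) q \<in> B" .
qed
lemma Cset_multr: assumes c: "c \<in> G l n" and u: "u \<in> Cset k l" shows "mult k l n u c \<in> Cset k n"
  unfolding Cset_def
proof (intro CollectI conjI ballI)
  have uG: "u \<in> G k l" using Cset_G[OF u] .
  show "mult k l n u c \<in> G k n" using c uG by simp
  fix p q assume p: "p \<in> G i0 k" and q: "q \<in> G n j0"
  have "mult i0 n j0 (mult i0 k n p (mult k l n u c)) q = mult i0 l j0 (mult i0 k l p u) (mult l n j0 c q)"
    using p q c uG by (simp add: assoc)
  also have "\<dots> \<in> B" using u p c q unfolding Cset_def by simp
  finally show "mult i0 n j0 (mult i0 k n p (mult k l n u c)) q \<in> B" .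
qed


lemma CC_carrier: "x \<in> CC \<Longrightarrow> x \<in> gm_carrier G" unfolding CC_def by blast
lemma CC_entry: "x \<in> CC \<Longrightarrow> x k l \<in> Cset k l" unfolding CC_def by blast
lemma CC_zero[simp]: "0 \<in> CC" unfolding CC_def by simp
lemma CC_add: "x \<in> CC \<Longrightarrow> y \<in> CC \<Longrightarrow> x + y \<in> CC"
  unfolding CC_def by (auto intro: Cset_add)
lemma CC_neg: "x \<in> CC \<Longrightarrow> - x \<in> CC"
  unfolding CC_def by (auto intro: Cset_neg)
lemma CC_diff: "x \<in> CC \<Longrightarrow> y \<in> CC \<Longrightarrow> x - y \<in> CC"
  using CC_add[of x "- y"] CC_neg[of y] by simp
lemma CC_multl: assumes a: "a \<in> gm_carrier G" and x: "x \<in> CC" shows "gm_mult mult a x \<in> CC"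
  unfolding CC_def
proof (intro CollectI conjI allI)
  show "gm_mult mult a x \<in> gm_carrier G" using a CC_carrier[OF x] by simp
  fix k l
  show "gm_mult mult a x k l \<in> Cset k l"
    unfolding gm_mult_def
    by (rule Cset_sum[OF row_fin[OF a]]) (simp add: Cset_multl carrier_G[OF a] CC_entry[OF x])
qed
lemma CC_multr: assumes a: "a \<in> gm_carrier G" and x: "x \<in> CC" shows "gm_mult mult x a \<in> CC"
  unfolding CC_def
proof (intro CollectI conjI allI)
  have xc: "x \<in> gm_carrier G" using CC_carrier[OF x] .
  show "gm_mult mult x a \<in> gm_carrier G" using a xc by simp
  fix k l
  show "gm_mult mult x a k l \<in> Cset k l"
    unfolding gm_mult_def
    by (rule Cset_sum[OF row_fin[OF xc]]) (simp add: Cset_multr carrier_G[OF a] CC_entry[OF x])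
qed

lemma CC_ideal: "gm_ring_ideal G mult CC"
  unfolding gm_ring_ideal_def gm_add_eq gm_neg_eq gm_zero_eq
  by (auto intro: CC_carrier CC_add CC_neg CC_multl CC_multr)

lemma CC_gm_ideal: "gm_ideal G mult CC"
  unfolding gm_ideal_def
proof (intro conjI CC_ideal ballI allI)
  fix x i j assume x: "x \<in> CC"
  show "gm_single i j (x i j) \<in> CC"
    unfolding CC_def using x Cset_G[OF CC_entry[OF x]]
    by (auto simp: gm_single_def[of i j] CC_entry[OF x] intro!: single_carrier[unfolded gm_single_def])
qed

lemma single_reg:
  assumes u: "u \<in> Cset k l"
  shows "\<exists>z\<in>G l k. mult k k l (mult k l k u z) u = u"
proof -
  have uG: "u \<in> G k l" using Cset_G[OF u] .
  obtain d1 where d1: "d1 \<in> G i0 k" and d1l: "\<forall>j. \<forall>y\<in>G k j. y \<noteq> 0 \<longrightarrow> mult i0 k j d1 y \<noteq> 0"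
    using nzd unfolding gm_nonzero_divisors_def by blast
  obtain d2 where d2: "d2 \<in> G l j0" and d2r: "\<forall>i. \<forall>x\<in>G i l. x \<noteq> 0 \<longrightarrow> mult i l j0 x d2 \<noteq> 0"
    using nzd unfolding gm_nonzero_divisors_def by blast
  define v where "v = mult i0 l j0 (mult i0 k l d1 u) d2"
  have vB: "v \<in> B" using u d1 d2 unfolding Cset_def v_def by blast
  obtain w where w: "w \<in> G j0 i0" and hv: "v = mult i0 i0 j0 (mult i0 j0 i0 v w) v"
    using Bregular[OF vB] by blast
  define z where "z = mult l i0 k (mult l j0 i0 d2 w) d1"
  have z: "z \<in> G l k" unfolding z_def using d1 d2 w by simp
  define r where "r = u - mult k k l (mult k l k u z) u"
  have r: "r \<in> G k l" unfolding r_def using uG z by simp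
  have "mult i0 l j0 (mult i0 k l d1 (mult k k l (mult k l k u z) u)) d2
      = mult i0 i0 j0 (mult i0 j0 i0 v w) v"
    unfolding z_def v_def using d1 d2 w uG by (simp add: assoc)
  then have "mult i0 l j0 (mult i0 k l d1 r) d2 = 0"
    unfolding r_def using d1 d2 w uG z hv by (simp add: diffl diffr v_def[symmetric])
  then have "mult i0 k l d1 r = 0" using d2r d1 r by (meson multG)
  then have "r = 0" using d1l r by blast
  then have "u = mult k k l (mult k l k u z) u" unfolding r_def by (simp only: right_minus_eq)
  then show ?thesis using z by (intro bexI[of _ z]) (rule sym)
qed


lemma BM: "x \<in> gm_carrier G \<Longrightarrow> y \<in> gm_carrier G \<Longrightarrow>
   gm_vn_regular G mult (x - gm_mult mult (gm_mult mult x y) x) \<Longrightarrow> gm_vn_regular G mult x"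
  unfolding gm_vn_regular_def by (rule rng_on.brown_mccoy'[OF rng])

lemma zero_reg: "gm_vn_regular G mult 0"
proof -
  have "gm_mult mult (0::'i \<Rightarrow> 'i \<Rightarrow> 'a) y = 0" for y
    unfolding gm_mult_def by (intro ext) simp
  then show ?thesis unfolding gm_vn_regular_def using carrier_zero by (intro bexI[of _ 0]) auto
qed

lemma row_reg:
  assumes L: "finite L"
  shows "\<forall>x. x \<in> CC \<and> (\<forall>i j. x i j \<noteq> 0 \<longrightarrow> i = k \<and> j \<in> L) \<longrightarrow> gm_vn_regular G mult x"
  using L
proof (induction L rule: finite_induct)
  case empty
  show ?case
  proof (intro allI impI)
    fix x :: "'i \<Rightarrow> 'i \<Rightarrow> 'a" assume "x \<in> CC \<and> (\<forall>i j. x i j \<noteq> 0 \<longrightarrow> i = k \<and> j \<in> {})"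
    then have "x = 0" by (intro ext) auto
    then show "gm_vn_regular G mult x" using zero_reg by simp
  qed
next
  case (insert n L)
  show ?case
  proof (intro allI impI)
    fix x :: "'i \<Rightarrow> 'i \<Rightarrow> 'a" assume hx: "x \<in> CC \<and> (\<forall>i j. x i j \<noteq> 0 \<longrightarrow> i = k \<and> j \<in> insert n L)"
    have xC: "x \<in> CC" and sx: "\<And>i j. x i j \<noteq> 0 \<Longrightarrow> i = k \<and> j \<in> insert n L" using hx by auto
    have xc: "x \<in> gm_carrier G" using CC_carrier[OF xC] .
    define u where "u = x k n"
    have u: "u \<in> Cset k n" unfolding u_def using CC_entry[OF xC] .
    have uG: "u \<in> G k n" using Cset_G[OF u] .
    obtain t where t: "t \<in> G n k" and ht: "mult k k n (mult k n k u t) u = u"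
      using single_reg[OF u] by blast
    define f where "f = mult k n k u t"
    have f: "f \<in> G k k" unfolding f_def using uG t by simp
    define y where "y = gm_single n k t"
    have y: "y \<in> gm_carrier G" unfolding y_def using t by simp
    have xy: "gm_mult mult x y = gm_single k k f"
    proof -
      have "gm_mult mult x y = (\<lambda>i j. if j = k then mult i n k (x i n) t else 0)"
        unfolding y_def by (rule mult_single_right[OF xc t])
      also have "\<dots> = gm_single k k f"
      proof (intro ext)
        fix i j
        show "(if j = k then mult i n k (x i n) t else 0) = gm_single k k f i j"
        proof (cases "i = k")
          case True then show ?thesis by (simp add: gm_single_def f_def u_def)
        next
          case False then have "x i n = 0" using sx[of i n] by blast
          then show ?thesis using False t by (simp add: gm_single_def)
        qed
      qed
      finally show ?thesis .
    qed
    have xyx: "gm_mult mult (gm_mult mult x y) x = (\<lambda>i j. if i = k then mult k k j f (x k j) else 0)"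
      unfolding xy by (rule mult_single_left[OF xc f])
    define x' where "x' = x - gm_mult mult (gm_mult mult x y) x"
    have x'C: "x' \<in> CC" unfolding x'_def using xC y xc by (intro CC_diff CC_multr) auto
    have sx': "x' i j \<noteq> 0 \<Longrightarrow> i = k \<and> j \<in> L" for i j
    proof -
      assume ne: "x' i j \<noteq> 0"
      have "i = k"
      proof (rule ccontr)
        assume "i \<noteq> k" then have "x i j = 0" using sx by blast
        with \<open>i \<noteq> k\<close> ne show False unfolding x'_def xyx by simp
      qed
      moreover have "j \<noteq> n"
      proof
        assume "j = n"
        with \<open>i = k\<close> ne show False unfolding x'_def xyx using ht by (simp add: f_def u_def)
      qed
      moreover have "j \<in> insert n L"
      proof (rule ccontr)
        assume "j \<notin> insert n L" then have "x k j = 0" using sx by blast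
        with \<open>i = k\<close> ne f show False unfolding x'_def xyx by simp
      qed
      ultimately show ?thesis by simp
    qed
    have "gm_vn_regular G mult x'" using insert.IH x'C sx' by blast
    then show "gm_vn_regular G mult x" using BM[OF xc y] unfolding x'_def by blast
  qed
qed


lemma mat_reg:
  assumes K: "finite K"
  shows "\<forall>x. x \<in> CC \<and> (\<forall>i j. x i j \<noteq> 0 \<longrightarrow> i \<in> K) \<longrightarrow> gm_vn_regular G mult x"
  using K
proof (induction K rule: finite_induct)
  case empty
  show ?case
  proof (intro allI impI)
    fix x :: "'i \<Rightarrow> 'i \<Rightarrow> 'a" assume "x \<in> CC \<and> (\<forall>i j. x i j \<noteq> 0 \<longrightarrow> i \<in> {})"
    then have "x = 0" by (intro ext) auto
    then show "gm_vn_regular G mult x" using zero_reg by simp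
  qed
next
  case (insert k K)
  show ?case
  proof (intro allI impI)
    fix x :: "'i \<Rightarrow> 'i \<Rightarrow> 'a" assume hx: "x \<in> CC \<and> (\<forall>i j. x i j \<noteq> 0 \<longrightarrow> i \<in> insert k K)"
    have xC: "x \<in> CC" and sx: "\<And>i j. x i j \<noteq> 0 \<Longrightarrow> i \<in> insert k K" using hx by auto
    have xc: "x \<in> gm_carrier G" using CC_carrier[OF xC] .
    define x1 where "x1 = (\<lambda>i j. if i = k then x i j else 0)"
    have x1c: "x1 \<in> gm_carrier G"
    proof -
      have "{(i, j). x1 i j \<noteq> 0} \<subseteq> {(i, j). x i j \<noteq> 0}" unfolding x1_def by auto
      then have "finite {(i, j). x1 i j \<noteq> 0}" using carrier_fin[OF xc] by (rule finite_subset)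
      moreover have "\<forall>i j. x1 i j \<in> G i j" unfolding x1_def using carrier_G[OF xc] by simp
      ultimately show ?thesis unfolding gm_carrier_def by blast
    qed
    have x1C: "x1 \<in> CC" unfolding CC_def using x1c CC_entry[OF xC] by (auto simp: x1_def)
    have "gm_vn_regular G mult x1"
      using row_reg[OF row_fin[OF xc, of k], of k] x1C by (auto simp: x1_def)
    then obtain y where y: "y \<in> gm_carrier G" and hy: "x1 = gm_mult mult (gm_mult mult x1 y) x1"
      unfolding gm_vn_regular_def by blast
    define y' where "y' = (\<lambda>p q. if q = k then y p q else 0)"
    have y'c: "y' \<in> gm_carrier G"
    proof -
      have "{(i, j). y' i j \<noteq> 0} \<subseteq> {(i, j). y i j \<noteq> 0}" unfolding y'_def by auto
      then have "finite {(i, j). y' i j \<noteq> 0}" using carrier_fin[OF y] by (rule finite_subset)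
      moreover have "\<forall>i j. y' i j \<in> G i j" unfolding y'_def using carrier_G[OF y] by simp
      ultimately show ?thesis unfolding gm_carrier_def by blast
    qed
    have xy': "gm_mult mult x y' i q = (if q = k then gm_mult mult x y i k else 0)" for i q
      unfolding gm_mult_def y'_def using xc y by (simp add: carrier_G)
    have xy'x: "gm_mult mult (gm_mult mult x y') x i j = mult i k j (gm_mult mult x y i k) (x k j)" for i j
    proof -
      have "gm_mult mult (gm_mult mult x y') x i j
          = (\<Sum>p\<in>{k}. mult i p j (gm_mult mult x y' i p) (x p j))"
      proof (rule gm_mult_eq[OF carrier_mult[OF xc y'c] xc])
        fix p assume "p \<notin> {k}"
        then show "gm_mult mult x y' i p = 0 \<or> x p j = 0" using xy'[of i p] by simp
      qed simp
      also have "\<dots> = mult i k j (gm_mult mult x y' i k) (x k j)" by simp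
      finally show ?thesis using xy'[of i k] by simp
    qed
    have x1y: "gm_mult mult x1 y k k = gm_mult mult x y k k"
      unfolding gm_mult_def x1_def by simp
    have x1yx1: "gm_mult mult (gm_mult mult x1 y) x1 k j = mult k k j (gm_mult mult x y k k) (x k j)" for j
    proof -
      have "gm_mult mult (gm_mult mult x1 y) x1 k j
          = (\<Sum>p\<in>{k}. mult k p j (gm_mult mult x1 y k p) (x1 p j))"
        by (rule gm_mult_eq) (use x1c y in \<open>auto simp: x1_def\<close>)
      moreover have "x1 k j = x k j" by (simp add: x1_def)
      ultimately show ?thesis by (simp add: x1y)
    qed
    define x' where "x' = x - gm_mult mult (gm_mult mult x y') x"
    have x'C: "x' \<in> CC" unfolding x'_def using xC y'c xc by (intro CC_diff CC_multr) auto
    have sx': "x' i j \<noteq> 0 \<Longrightarrow> i \<in> K" for i j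
    proof (rule ccontr)
      assume ne: "x' i j \<noteq> 0" and nK: "i \<notin> K"
      show False
      proof (cases "i = k")
        case True
        have "x k j = x1 k j" unfolding x1_def by simp
        also have "\<dots> = gm_mult mult (gm_mult mult x1 y) x1 k j"
          using fun_cong[OF fun_cong[OF hy, of k], of j] .
        also have "\<dots> = mult k k j (gm_mult mult x y k k) (x k j)"
          by (rule x1yx1)
        finally show False using ne True unfolding x'_def by (simp add: xy'x)
      next
        case False
        then have i: "i \<notin> insert k K" using nK by simp
        then have "\<forall>l. x i l = 0" using sx by blast
        then have "gm_mult mult x y i k = 0" unfolding gm_mult_def by simp
        moreover have "x i j = 0" using sx i by blast
        ultimately show False using ne xc unfolding x'_def by (simp add: xy'x carrier_G)
      qed
    qed
    have "gm_vn_regular G mult x'" using insert.IH x'C sx' by blast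
    then show "gm_vn_regular G mult x" using BM[OF xc y'c] unfolding x'_def by blast
  qed
qed

lemma CC_reg: "x \<in> CC \<Longrightarrow> gm_vn_regular G mult x"
  using mat_reg[OF rows_fin[OF CC_carrier]] by blast

lemma CC_rn: "CC \<subseteq> rn_ring G mult"
  unfolding rn_ring_def using CC_ideal CC_reg by blast

lemma single_in_CC: assumes b: "b \<in> B" shows "gm_single i0 j0 b \<in> CC"
proof -
  have bG: "b \<in> G i0 j0" using BG[OF b] .
  have "b \<in> Cset i0 j0" unfolding Cset_def using bG by (auto intro!: rB lB b)
  moreover have "gm_single i0 j0 b \<in> gm_carrier G" using bG by simp
  ultimately show ?thesis unfolding CC_def by (auto simp: gm_single_def)
qed

end

lemma gamma_zero:
  assumes gm: "gm_ring G mult" and nzd: "gm_nonzero_divisors G mult"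
    and hyp: "\<forall>B. gm_ideal G mult B \<and> B \<subseteq> rn_ring G mult \<longrightarrow> B = {gm_zero}"
    and Bid: "gamma_ideal G mult i j B" and Breg: "\<forall>x\<in>B. gamma_vn_regular G mult i j x"
    and b: "b \<in> B"
  shows "b = 0"
proof -
  interpret gmr2 G mult i j B using gm nzd Bid Breg by unfold_locales auto
  have "CC = {gm_zero}" using hyp CC_gm_ideal CC_rn by blast
  then have "gm_single i j b = gm_zero" using single_in_CC[OF b] by blast
  then have "gm_single i j b i j = gm_zero i j" by simp
  then show ?thesis by (simp add: gm_single_def gm_zero_def)
qed

theorem lemma2p2:
  fixes G :: "'i \<Rightarrow> 'i \<Rightarrow> 'a::ab_group_add set"
    and mult :: "'i \<Rightarrow> 'i \<Rightarrow> 'i \<Rightarrow> 'a \<Rightarrow> 'a \<Rightarrow> 'a"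
  assumes "gm_ring G mult"
    and "gm_nonzero_divisors G mult"
    and "\<forall>B. gm_ideal G mult B \<and> B \<subseteq> rn_ring G mult \<longrightarrow> B = {gm_zero}"
  shows "\<forall>i j. rn_gamma G mult i j = {0}"
proof (intro allI)
  fix i j
  interpret gmr G mult using assms(1) by unfold_locales
  have "{0} \<subseteq> rn_gamma G mult i j"
  proof -
    have "gamma_ideal G mult i j {0}" unfolding gamma_ideal_def by simp
    moreover have "gamma_vn_regular G mult i j 0"
      unfolding gamma_vn_regular_def by (rule bexI[of _ 0]) simp_all
    ultimately show ?thesis unfolding rn_gamma_def by blast
  qed
  moreover have "rn_gamma G mult i j \<subseteq> {0}"
    unfolding rn_gamma_def using gamma_zero[OF assms] by blast
  ultimately show "rn_gamma G mult i j = {0}" by blast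
qed

end
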